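(* Let $G$ be a group, $A$ an additive abelian group with a right $G$-action by group automorphisms, $n\in\mathbb Z_+$ and $a\in\mathcal P_n(G,A)$. Then $D^na$ is an $n$-cocycle of $G$ with values in $A^G$: it lies in $\mathcal C^n(G,A^G)$ and $\delta^nD^na=0$.
   Context: Right action: $a\mapsto a^g$, $a^{\mathbf e}=a$, $(a^g)^h=a^{gh}$, additive in $a$; $\mathbf e$ the identity. $A^G=\{a:a^g=a\ \forall g\}$. $\mathcal C^0(G,M)=M$; for $n\ge1$, $\mathcal C^n(G,M)$ is the group of functions $G^n\to M$ vanishing whenever some argument is $\mathbf e$. For $n\ge1$, $(d_nc)(g_1,\dots,g_n)=[c(g_1,\dots,g_{n-1})]^{g_n}-c(g_1,\dots,g_{n-1})$; $D^0=\mathrm{id}_A$, $D^n=d_nD^{n-1}$; $\mathcal P_n(G,A)=\ker D^{n+1}$. Coboundary (trivial left action): $[\delta^nc](g_1,\dots,g_{n+1})=c(g_2,\dots,g_{n+1})+\sum_{i=1}^{n}(-1)^ic(g_1,\dots,g_ig_{i+1},\dots,g_{n+1})+(-1)^{n+1}c(g_1,\dots,g_n)$, with $\delta^0=0$. *)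

theory Defs
  imports "HOL-Algebra.Group"
begin

text \<open>Elements of G^n are lists of length n of elements of carrier G;
 functions G^n \<rightarrow> M are functions on lists.\<close>

definition right_action :: "('g, 'b) monoid_scheme \<Rightarrow> ('a::ab_group_add \<Rightarrow> 'g \<Rightarrow> 'a) \<Rightarrow> bool" where
  "right_action G act \<longleftrightarrow>
     (\<forall>a. act a \<one>\<^bsub>G\<^esub> = a) \<and>
     (\<forall>a g h. g \<in> carrier G \<longrightarrow> h \<in> carrier G \<longrightarrow> act (act a g) h = act a (g \<otimes>\<^bsub>G\<^esub> h)) \<and>
     (\<forall>a b g. g \<in> carrier G \<longrightarrow> act (a + b) g = act a g + act b g)"

definition tuples :: "('g, 'b) monoid_scheme \<Rightarrow> nat \<Rightarrow> 'g list set" where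
  "tuples G n = {gs. length gs = n \<and> set gs \<subseteq> carrier G}"

definition invariants :: "('g, 'b) monoid_scheme \<Rightarrow> ('a \<Rightarrow> 'g \<Rightarrow> 'a) \<Rightarrow> 'a set" where
  "invariants G act = {a. \<forall>g \<in> carrier G. act a g = a}"

definition cochains :: "('g, 'b) monoid_scheme \<Rightarrow> nat \<Rightarrow> 'a::zero set \<Rightarrow> ('g list \<Rightarrow> 'a) set" where
  "cochains G n M = {c. (\<forall>gs \<in> tuples G n. c gs \<in> M) \<and>
                        (\<forall>gs \<in> tuples G n. \<one>\<^bsub>G\<^esub> \<in> set gs \<longrightarrow> c gs = 0)}"

definition dop :: "('a::ab_group_add \<Rightarrow> 'g \<Rightarrow> 'a) \<Rightarrow> ('g list \<Rightarrow> 'a) \<Rightarrow> 'g list \<Rightarrow> 'a" where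
  "dop act c gs = act (c (butlast gs)) (last gs) - c (butlast gs)"

fun Dop :: "('a::ab_group_add \<Rightarrow> 'g \<Rightarrow> 'a) \<Rightarrow> nat \<Rightarrow> 'a \<Rightarrow> 'g list \<Rightarrow> 'a" where
  "Dop act 0 a = (\<lambda>_. a)"
| "Dop act (Suc n) a = dop act (Dop act n a)"

definition Pset :: "('g, 'b) monoid_scheme \<Rightarrow> ('a::ab_group_add \<Rightarrow> 'g \<Rightarrow> 'a) \<Rightarrow> nat \<Rightarrow> 'a set" where
  "Pset G act n = {a. \<forall>gs \<in> tuples G (Suc n). Dop act (Suc n) a gs = 0}"

definition signed :: "nat \<Rightarrow> 'a::ab_group_add \<Rightarrow> 'a" where
  "signed i x = (if even i then x else - x)"

text \<open>Coboundary with trivial left action; positions are 1-based in the paper,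
 list index i-1 here.\<close>
definition merge_at :: "('g, 'b) monoid_scheme \<Rightarrow> nat \<Rightarrow> 'g list \<Rightarrow> 'g list" where
  "merge_at G i gs = take (i - 1) gs @ [gs ! (i - 1) \<otimes>\<^bsub>G\<^esub> gs ! i] @ drop (i + 1) gs"

definition coboundary :: "('g, 'b) monoid_scheme \<Rightarrow> nat \<Rightarrow> ('g list \<Rightarrow> 'a::ab_group_add) \<Rightarrow> 'g list \<Rightarrow> 'a" where
  "coboundary G n c gs =
     (if n = 0 then 0 else
      c (tl gs) + (\<Sum>i = 1..n. signed i (c (merge_at G i gs)))
        + signed (n + 1) (c (take n gs)))"

end

theory Submission
  imports Defs
begin

definition RR :: "('a::ab_group_add \<Rightarrow> 'g \<Rightarrow> 'a) \<Rightarrow> 'a \<Rightarrow> 'g list \<Rightarrow> 'a" where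
  "RR act x ys = foldl (\<lambda>x g. act x g - x) x ys"

lemma RR_Nil[simp]: "RR act x [] = x" by (simp add: RR_def)
lemma RR_Cons[simp]: "RR act x (g # ys) = RR act (act x g - x) ys" by (simp add: RR_def)
lemma RR_append: "RR act x (xs @ ys) = RR act (RR act x xs) ys" by (simp add: RR_def)

lemma Dop_RR: "length gs = k \<Longrightarrow> Dop act k a gs = RR act a gs"
proof (induction k arbitrary: gs)
  case 0 then show ?case by simp
next
  case (Suc k)
  then have ne: "gs \<noteq> []" by auto
  have e: "gs = butlast gs @ [last gs]" using ne by simp
  have "Dop act (Suc k) a gs = act (RR act a (butlast gs)) (last gs) - RR act a (butlast gs)"
    using Suc by (simp add: dop_def)
  also have "\<dots> = RR act a (butlast gs @ [last gs])" by (simp add: RR_append)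
  finally show ?case using e by simp
qed

context
  fixes G :: "('g, 'b) monoid_scheme" and act :: "'a::ab_group_add \<Rightarrow> 'g \<Rightarrow> 'a"
  assumes ra: "right_action G act"
begin

lemma act_add: "g \<in> carrier G \<Longrightarrow> act (x + y) g = act x g + act y g"
  using ra by (simp add: right_action_def)

lemma act_diff: "g \<in> carrier G \<Longrightarrow> act (x - y) g = act x g - act y g"
proof -
  assume g: "g \<in> carrier G"
  have "act (x - y + y) g = act (x - y) g + act y g" using act_add[OF g] .
  then show ?thesis by (simp add: algebra_simps)
qed

lemma act_one: "act x \<one>\<^bsub>G\<^esub> = x" using ra by (simp add: right_action_def)

lemma act_mult: "g \<in> carrier G \<Longrightarrow> h \<in> carrier G \<Longrightarrow> act (act x g) h = act x (g \<otimes>\<^bsub>G\<^esub> h)"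
  using ra by (simp add: right_action_def)

lemma RR_add: "set ys \<subseteq> carrier G \<Longrightarrow> RR act (x + y) ys = RR act x ys + RR act y ys"
proof (induction ys arbitrary: x y)
  case Nil then show ?case by simp
next
  case (Cons g ys)
  have "act (x + y) g - (x + y) = (act x g - x) + (act y g - y)"
    using act_add[of g x y] Cons.prems by simp
  then have "RR act (x + y) (g # ys) = RR act ((act x g - x) + (act y g - y)) ys"
    by (simp only: RR_Cons)
  also have "\<dots> = RR act (act x g - x) ys + RR act (act y g - y) ys"
    using Cons by simp
  finally show ?case by (simp only: RR_Cons)
qed

lemma RR_zero: "set ys \<subseteq> carrier G \<Longrightarrow> RR act 0 ys = 0"
  using RR_add[of ys 0 0] by simp

lemma RR_one: "set ys \<subseteq> carrier G \<Longrightarrow> \<one>\<^bsub>G\<^esub> \<in> set ys \<Longrightarrow> RR act x ys = 0"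
proof (induction ys arbitrary: x)
  case Nil then show ?case by simp
next
  case (Cons g ys)
  show ?case
  proof (cases "g = \<one>\<^bsub>G\<^esub>")
    case True
    then show ?thesis using Cons.prems RR_zero[of ys] by (simp add: act_one)
  next
    case False
    then show ?thesis using Cons by simp
  qed
qed

lemma RR_merge:
  assumes g: "g \<in> carrier G" and h: "h \<in> carrier G" and ys: "set ys \<subseteq> carrier G"
  shows "RR act x ((g \<otimes>\<^bsub>G\<^esub> h) # ys) = RR act x (g # h # ys) + RR act x (g # ys) + RR act x (h # ys)"
proof -
  have "act x (g \<otimes>\<^bsub>G\<^esub> h) - x
     = (act (act x g - x) h - (act x g - x)) + (act x g - x) + (act x h - x)"
    using act_diff[OF h, of "act x g" x] act_mult[OF g h, of x] by (simp add: algebra_simps)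
  then have "RR act x ((g \<otimes>\<^bsub>G\<^esub> h) # ys) = RR act ((act (act x g - x) h - (act x g - x)) + (act x g - x) + (act x h - x)) ys"
    by (simp only: RR_Cons)
  also have "\<dots> = RR act x (g # h # ys) + RR act x (g # ys) + RR act x (h # ys)"
    unfolding RR_add[OF ys] by (simp only: RR_Cons)
  finally show ?thesis .
qed

end

lemma telescope:
  fixes P :: "nat \<Rightarrow> 'a::ab_group_add"
  shows "P 0 + (\<Sum>i = 1..n. signed i (P i + P (i - 1))) + signed (n + 1) (P n) = 0"
proof (induction n)
  case 0 then show ?case by (simp add: signed_def)
next
  case (Suc n)
  have "P 0 + (\<Sum>i = 1..Suc n. signed i (P i + P (i - 1))) + signed (Suc n + 1) (P (Suc n))
      = (P 0 + (\<Sum>i = 1..n. signed i (P i + P (i - 1)))) + signed (Suc n) (P (Suc n) + P n)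
        + signed (Suc n + 1) (P (Suc n))"
    by (simp add: algebra_simps)
  also have "\<dots> = 0"
  proof -
    define S where "S = P 0 + (\<Sum>i = 1..n. signed i (P i + P (i - 1)))"
    have IH: "S = - signed (n + 1) (P n)" using Suc unfolding S_def by (simp add: eq_neg_iff_add_eq_0)
    show ?thesis unfolding S_def[symmetric] IH by (cases "even n") (simp_all add: signed_def)
  qed
  finally show ?case .
qed

theorem corollary1p22:
  fixes G :: "('g, 'b) monoid_scheme"
    and act :: "'a::ab_group_add \<Rightarrow> 'g \<Rightarrow> 'a"
    and n :: nat and a :: 'a
  assumes "group G"
    and "right_action G act"
    and "n \<ge> 1"
    and "a \<in> Pset G act n"
  shows "Dop act n a \<in> cochains G n (invariants G act) \<and>
         (\<forall>gs \<in> tuples G (n + 1). coboundary G n (Dop act n a) gs = 0)"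
proof -
  note ra = assms(2)
  have P: "RR act a gs = 0" if "length gs = Suc n" "set gs \<subseteq> carrier G" for gs
    using assms(4) that Dop_RR[of gs "Suc n" act a] by (auto simp: Pset_def tuples_def)
  have inv: "Dop act n a gs \<in> invariants G act" if "gs \<in> tuples G n" for gs
  proof -
    have L: "length gs = n" "set gs \<subseteq> carrier G" using that by (auto simp: tuples_def)
    have "act (RR act a gs) g = RR act a gs" if g: "g \<in> carrier G" for g
    proof -
      have "RR act a (gs @ [g]) = 0" using P[of "gs @ [g]"] L g by simp
      then show ?thesis by (simp add: RR_append)
    qed
    moreover have "Dop act n a gs = RR act a gs" by (rule Dop_RR[OF L(1)])
    ultimately show ?thesis by (simp add: invariants_def)
  qed
  have van: "Dop act n a gs = 0" if "gs \<in> tuples G n" "\<one>\<^bsub>G\<^esub> \<in> set gs" for gs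
  proof -
    have L: "length gs = n" "set gs \<subseteq> carrier G" using that by (auto simp: tuples_def)
    have "Dop act n a gs = RR act a gs" by (rule Dop_RR[OF L(1)])
    also have "\<dots> = 0" by (rule RR_one[OF ra L(2) that(2)])
    finally show ?thesis .
  qed
  have cob: "coboundary G n (Dop act n a) gs = 0" if "gs \<in> tuples G (n + 1)" for gs
  proof -
    have L: "length gs = Suc n" "set gs \<subseteq> carrier G" using that by (auto simp: tuples_def)
    have elem: "gs ! j \<in> carrier G" if "j < Suc n" for j
    proof -
      have "gs ! j \<in> set gs" using L(1) that by simp
      then show ?thesis using L(2) by (rule subsetD[rotated])
    qed
    define Q where "Q j = RR act a (take j gs @ drop (Suc j) gs)" for j
    have len: "length (take j gs @ drop (Suc j) gs) = n" if "j \<le> n" for j using L that by simp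
    have DQ: "Dop act n a (take j gs @ drop (Suc j) gs) = Q j" if "j \<le> n" for j
      using Dop_RR[OF len[OF that]] Q_def by simp
    have sd: "set (drop k gs) \<subseteq> carrier G" "set (take k gs) \<subseteq> carrier G" for k
      using order_trans[OF set_drop_subset[of k gs] L(2)] order_trans[OF set_take_subset[of k gs] L(2)] by auto
    have M: "Dop act n a (merge_at G i gs) = Q i + Q (i - 1)" if i: "1 \<le> i" "i \<le> n" for i
    proof -
      have lm: "length (merge_at G i gs) = n" using L i by (simp add: merge_at_def)
      have dr: "drop i gs = gs ! i # drop (Suc i) gs" using L i by (simp add: Cons_nth_drop_Suc)
      have si: "Suc (i - 1) = i" using i by simp
      have il: "i - 1 < length gs" using L i by simp
      have dr2: "drop (i - 1) gs = gs ! (i - 1) # drop i gs"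
        using Cons_nth_drop_Suc[OF il] unfolding si by simp
      have tk: "take i gs = take (i - 1) gs @ [gs ! (i - 1)]"
        using take_Suc_conv_app_nth[OF il] unfolding si by simp
      have full: "gs = take (i - 1) gs @ gs ! (i - 1) # gs ! i # drop (Suc i) gs"
        using dr dr2 by (metis append_take_drop_id)
      have "RR act a (merge_at G i gs) = RR act (RR act a (take (i - 1) gs))
              ((gs ! (i - 1) \<otimes>\<^bsub>G\<^esub> gs ! i) # drop (i + 1) gs)"
        by (simp add: merge_at_def RR_append)
      also have "\<dots> = RR act (RR act a (take (i - 1) gs)) (gs ! (i - 1) # gs ! i # drop (Suc i) gs)
           + RR act (RR act a (take (i - 1) gs)) (gs ! (i - 1) # drop (Suc i) gs)
           + RR act (RR act a (take (i - 1) gs)) (gs ! i # drop (Suc i) gs)"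
        using RR_merge[OF ra elem elem sd(1)] i by simp
      also have "RR act (RR act a (take (i - 1) gs)) (gs ! (i - 1) # gs ! i # drop (Suc i) gs) = 0"
        using P[OF L] full by (metis RR_append)
      also have "RR act (RR act a (take (i - 1) gs)) (gs ! (i - 1) # drop (Suc i) gs) = Q i"
        unfolding Q_def using tk by (simp add: RR_append)
      also have "RR act (RR act a (take (i - 1) gs)) (gs ! i # drop (Suc i) gs) = Q (i - 1)"
        unfolding Q_def using i dr by (simp add: RR_append)
      finally show ?thesis using Dop_RR[OF lm, where act=act and a=a] by simp
    qed
    have t0: "Dop act n a (tl gs) = Q 0" using DQ[of 0] by (simp add: drop_Suc)
    have tn: "Dop act n a (take n gs) = Q n" using DQ[of n] L by simp
    have "(\<Sum>i = 1..n. signed i (Dop act n a (merge_at G i gs))) = (\<Sum>i = 1..n. signed i (Q i + Q (i - 1)))"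
      by (rule sum.cong) (auto simp: M)
    then show ?thesis using telescope[of Q n] assms(3) t0 tn
      by (simp add: coboundary_def)
  qed
  show ?thesis using inv van cob by (auto simp: cochains_def)
qed

end
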